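(* Let $\varphi:S^1\to S^1$ be a minimal orientation preserving circle homeomorphism (equivalently, conjugate to an irrational rotation) with lift $\Phi:\mathbb{R}\to\mathbb{R}$, and let $x_0\in\mathbb{R}$ be arbitrary. Then the curlicue $\Gamma(x_0)$ generated by the orbit $u_n=\Phi^n(x_0)$ is bounded and superficial if and only if the cohomological equation $$\exp(2\pi\imath x)+u(x)=u(\varphi(x))\quad\text{for all }x$$ has a continuous solution $u:S^1\to\mathbb{C}$. Moreover, if $\Gamma(x_0)$ is bounded, then $\lim_{N\to\infty}\frac1N\sum_{k=0}^{N-1}\exp(2\pi\imath\Phi^k(x_0))=0$ and the vertices $z_n$ of $\Gamma(x_0)$ lie on the curve $u(S^1)\subset\mathbb{C}$, where $u$ is the continuous solution of the cohomological equation with $u(x_0)=0$ (indeed $z_n=u(\varphi^n(x_0))$).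
   Context: Identify $S^1=\mathbb{R}/\mathbb{Z}$ via $x\mapsto\exp(2\pi\imath x)$, and identify $\varphi$ with $\Phi\bmod 1$; functions on $S^1$ are viewed as $1$-periodic functions on $\mathbb{R}$. For a real sequence $u=(u_n)_{n\ge0}$, the curlicue is the piecewise linear curve in $\mathbb{C}$ passing consecutively through $z_0=0$ and $z_n=\sum_{k=0}^{n-1}\exp(2\pi\imath u_k)$, $n\ge1$. For $t>0$, $\Gamma_t$ is the initial part of $\Gamma$ of length $t$ and $\Gamma^{\varepsilon}=\{y:\exists x\in\Gamma,|x-y|<\varepsilon\}$. An unbounded curve is superficial if $\lim_{t\to\infty}t/\mathrm{Diam}\,\Gamma_t=\infty$; a bounded curve is superficial if $\lim_{\varepsilon\to0}\mathrm{Area}(\Gamma^{\varepsilon})/\varepsilon=\infty$ (Area = 2-dimensional Lebesgue measure). *)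

theory Defs
  imports "HOL-Analysis.Analysis"
begin

text \<open>S^1 = R/Z; a circle map is represented by its lift Phi : R -> R.\<close>
definition circle_homeo_lift :: "(real \<Rightarrow> real) \<Rightarrow> bool" where
  "circle_homeo_lift \<Phi> \<longleftrightarrow> continuous_on UNIV \<Phi> \<and> strict_mono \<Phi> \<and> (\<forall>x. \<Phi> (x + 1) = \<Phi> x + 1)"

text \<open>Minimality: no nonempty proper closed invariant subset of S^1, phrased via
  1-periodic closed subsets of R (preimages of closed subsets of S^1).\<close>
definition minimal_lift :: "(real \<Rightarrow> real) \<Rightarrow> bool" where
  "minimal_lift \<Phi> \<longleftrightarrow>
     (\<forall>C. closed C \<and> (\<forall>x. x \<in> C \<longleftrightarrow> x + 1 \<in> C) \<and> \<Phi> ` C = C \<longrightarrow> C = {} \<or> C = UNIV)"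

definition curlicue_vertex :: "(nat \<Rightarrow> real) \<Rightarrow> nat \<Rightarrow> complex" where
  "curlicue_vertex u n = (\<Sum>k<n. exp (2 * of_real pi * \<i> * of_real (u k)))"

text \<open>Unit-speed (arc length) parametrisation of the piecewise linear curve
  through z_0, z_1, ...; each segment [z_n, z_(n+1)] has length 1.\<close>
definition curlicue_path :: "(nat \<Rightarrow> real) \<Rightarrow> real \<Rightarrow> complex" where
  "curlicue_path u t =
     curlicue_vertex u (nat \<lfloor>t\<rfloor>) + of_real (t - of_int \<lfloor>t\<rfloor>) * exp (2 * of_real pi * \<i> * of_real (u (nat \<lfloor>t\<rfloor>)))"

definition curlicue :: "(nat \<Rightarrow> real) \<Rightarrow> complex set" where
  "curlicue u = curlicue_path u ` {0..}"

definition curlicue_initial :: "(nat \<Rightarrow> real) \<Rightarrow> real \<Rightarrow> complex set" where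
  "curlicue_initial u t = curlicue_path u ` {0..t}"

definition eps_nbhd :: "complex set \<Rightarrow> real \<Rightarrow> complex set" where
  "eps_nbhd \<Gamma> \<epsilon> = {y. \<exists>x\<in>\<Gamma>. dist x y < \<epsilon>}"

definition superficial :: "(nat \<Rightarrow> real) \<Rightarrow> bool" where
  "superficial u \<longleftrightarrow>
     (if bounded (curlicue u)
      then filterlim (\<lambda>\<epsilon>. measure lborel (eps_nbhd (curlicue u) \<epsilon>) / \<epsilon>) at_top (at_right 0)
      else filterlim (\<lambda>t. t / diameter (curlicue_initial u t)) at_top at_top)"

definition cohom_solution :: "(real \<Rightarrow> real) \<Rightarrow> (real \<Rightarrow> complex) \<Rightarrow> bool" where
  "cohom_solution \<Phi> v \<longleftrightarrow> continuous_on UNIV v \<and> (\<forall>x. v (x + 1) = v x) \<and>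
     (\<forall>x. exp (2 * of_real pi * \<i> * of_real x) + v x = v (\<Phi> x))"

end

theory Submission
  imports Defs
begin


definition ee :: "real \<Rightarrow> complex" where "ee x = exp (2 * of_real pi * \<i> * of_real x)"

lemma ee_int: "ee (x + of_int k) = ee x"
proof -
  have "ee (x + of_int k) = exp (2 * of_real pi * \<i> * of_real x + 2 * of_real pi * \<i> * of_int k)"
    unfolding ee_def by (simp add: distrib_left)
  also have "\<dots> = ee x * exp (2 * of_real pi * \<i> * of_int k)"
    unfolding ee_def by (rule exp_add)
  also have "exp (2 * of_real pi * \<i> * of_int k) = 1"
  proof -
    have "2 * of_real pi * \<i> * of_int k = of_real (2 * (of_int k :: real) * pi) * \<i>" by (simp add: mult_ac)
    show ?thesis using exp_integer_2pi[of "of_int k :: real"] by (simp add: mult_ac)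
  qed
  finally show ?thesis by simp
qed

lemma ee_1: "ee (x + 1) = ee x" using ee_int[of x 1] by simp

lemma norm_ee: "norm (ee x) = 1"
proof -
  have "ee x = exp (\<i> * of_real (2 * pi * x))" by (simp add: ee_def algebra_simps)
  then show ?thesis by (simp only: norm_exp_i_times)
qed

lemma isCont_ee: "isCont ee x" unfolding ee_def by (intro continuous_intros)

locale circ =
  fixes \<Phi> :: "real \<Rightarrow> real"
  assumes lift: "circle_homeo_lift \<Phi>"
begin

lemma cont: "isCont \<Phi> x" using lift unfolding circle_homeo_lift_def
  by (simp add: continuous_on_eq_continuous_at)
lemma smono: "strict_mono \<Phi>" using lift unfolding circle_homeo_lift_def by simp
lemma plus1: "\<Phi> (x + 1) = \<Phi> x + 1" using lift unfolding circle_homeo_lift_def by simp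

lemma plus_nat: "\<Phi> (x + of_nat n) = \<Phi> x + of_nat n"
proof (induction n arbitrary: x)
  case (Suc n)
  have "\<Phi> (x + of_nat (Suc n)) = \<Phi> ((x + of_nat n) + 1)" by (simp add: algebra_simps)
  then show ?case using Suc plus1 by simp
qed simp

lemma plus_int: "\<Phi> (x + of_int k) = \<Phi> x + of_int k"
proof (cases "k \<ge> 0")
  case True then obtain n where "k = int n" using nonneg_eq_int by blast
  then show ?thesis using plus_nat by simp
next
  case False
  define n where "n = nat (- k)"
  have k: "k = - int n" using False unfolding n_def by simp
  have "\<Phi> x = \<Phi> ((x - of_nat n) + of_nat n)" by simp
  also have "\<dots> = \<Phi> (x - of_nat n) + of_nat n" by (rule plus_nat)
  finally show ?thesis using k by simp
qed

lemma iter_int: "(\<Phi> ^^ n) (x + of_int k) = (\<Phi> ^^ n) x + of_int k"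
  by (induction n) (simp_all add: plus_int)

lemma surj: "surj \<Phi>"
proof -
  have "\<exists>x. \<Phi> x = y" for y
  proof -
    define m where "m = \<lfloor>y - \<Phi> 0\<rfloor>"
    have m1: "of_int m \<le> y - \<Phi> 0" unfolding m_def by (rule of_int_floor_le) 
    have m2: "y - \<Phi> 0 < of_int m + 1" unfolding m_def by (rule real_of_int_floor_add_one_gt) 
    have a: "\<Phi> (of_int m) \<le> y" using plus_int[of 0 m] m1 by simp 
    have b: "y \<le> \<Phi> (of_int m + 1)" using plus_int[of 0 "m+1"] m2 by simp 
    have "continuous_on {of_int m .. of_int m + 1} \<Phi>" using cont by (intro continuous_at_imp_continuous_on) auto 
    then obtain x where "\<Phi> x = y" using IVT'[of \<Phi> "of_int m" y "of_int m + 1", OF a b] by fastforce 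
    then show ?thesis by blast
  qed
  then show ?thesis unfolding surj_def by (metis (full_types))
qed

lemma inj: "inj \<Phi>" by (metis injI smono strict_mono_eq)

definition \<Psi> where "\<Psi> = inv \<Phi>"
lemma \<Psi>_\<Phi>[simp]: "\<Psi> (\<Phi> x) = x" unfolding \<Psi>_def using inj by (rule inv_f_f)
lemma \<Phi>_\<Psi>[simp]: "\<Phi> (\<Psi> y) = y" unfolding \<Psi>_def using surj by (rule surj_f_inv_f)
lemma cont_\<Psi>: "isCont \<Psi> y"
proof -
  obtain x where "y = \<Phi> x" using surj unfolding surj_def by blast
  then show ?thesis using isCont_inverse_function[where d=1 and x=x and f=\<Phi> and g=\<Psi>] cont by force
qed

end


lemma Zorn_min:
  assumes ne: "A \<noteq> {}" and ch: "\<And>C. subset.chain A C \<Longrightarrow> C \<noteq> {} \<Longrightarrow> \<Inter>C \<in> A"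
  shows "\<exists>M\<in>A. \<forall>X\<in>A. X \<subseteq> M \<longrightarrow> X = M"
proof -
  have "\<exists>M\<in>uminus ` A. \<forall>X\<in>uminus ` A. M \<subseteq> X \<longrightarrow> X = M"
  proof (rule subset_Zorn)
    fix C assume C: "subset.chain (uminus ` A) C"
    show "\<exists>U\<in>uminus ` A. \<forall>X\<in>C. X \<subseteq> U"
    proof (cases "C = {}")
      case True then show ?thesis using ne by auto
    next
      case False
      have "subset.chain A (uminus ` C)"
        using C unfolding subset_chain_def by (auto simp: image_iff)
      then have "\<Inter>(uminus ` C) \<in> A" using ch False by blast
      show ?thesis
      proof (rule bexI[where x="- \<Inter>(uminus ` C)"])
        show "\<forall>X\<in>C. X \<subseteq> - \<Inter>(uminus ` C)" by auto
        show "- \<Inter>(uminus ` C) \<in> uminus ` A"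
          by (rule image_eqI[where x="\<Inter>(uminus ` C)"]) (simp_all add: \<open>\<Inter>(uminus ` C) \<in> A\<close>)
      qed
    qed
  qed
  then obtain M where M: "M \<in> uminus ` A" "\<forall>X\<in>uminus ` A. M \<subseteq> X \<longrightarrow> X = M" by blast
  show ?thesis
  proof (intro bexI[of _ "- M"] ballI impI)
    show "- M \<in> A" using M(1) by auto
    fix X assume "X \<in> A" "X \<subseteq> - M"
    then have "- X \<in> uminus ` A" "M \<subseteq> - X" by auto
    then show "X = - M" using M(2) by (metis double_compl)
  qed
qed

definition per :: "(real \<times> complex) set \<Rightarrow> bool" where
  "per M \<longleftrightarrow> (\<forall>x z. (x,z) \<in> M \<longleftrightarrow> (x+1,z) \<in> M)"

lemma per_nat: "per M \<Longrightarrow> (x + of_nat n, z) \<in> M \<longleftrightarrow> (x, z) \<in> M"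
proof (induction n arbitrary: x)
  case (Suc n)
  have "(x + of_nat (Suc n), z) \<in> M \<longleftrightarrow> ((x + of_nat n) + 1, z) \<in> M" by (simp add: algebra_simps)
  also have "\<dots> \<longleftrightarrow> (x + of_nat n, z) \<in> M" using Suc.prems unfolding per_def by blast
  finally show ?case using Suc by blast
qed simp

lemma per_int: "per M \<Longrightarrow> (x + of_int k, z) \<in> M \<longleftrightarrow> (x, z) \<in> M"
proof (cases "k \<ge> 0")
  case True then obtain n where "k = int n" using nonneg_eq_int by blast
  then show "per M \<Longrightarrow> ?thesis" using per_nat[of M x n] by simp
next
  case False
  define n where "n = nat (- k)"
  have k: "k = - int n" using False unfolding n_def by simp
  assume "per M"
  then have "((x - of_nat n) + of_nat n, z) \<in> M \<longleftrightarrow> (x - of_nat n, z) \<in> M" by (rule per_nat)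
  then show ?thesis using k by simp
qed

context circ
begin

definition T :: "real \<times> complex \<Rightarrow> real \<times> complex" where
  "T p = (\<Phi> (fst p), snd p + ee (fst p))"
definition S :: "real \<times> complex \<Rightarrow> real \<times> complex" where
  "S p = (\<Psi> (fst p), snd p - ee (\<Psi> (fst p)))"

lemma T_S[simp]: "T (S p) = p" by (cases p) (simp add: T_def S_def)
lemma S_T[simp]: "S (T p) = p" by (cases p) (simp add: T_def S_def)

lemma isCont_S: "isCont S p"
proof -
  have c1: "isCont (\<lambda>p. \<Psi> (fst p)) p"
    by (rule isCont_o2[where f=fst and g=\<Psi>]) (auto intro: cont_\<Psi> continuous_intros)
  have c2: "isCont (\<lambda>p. ee (\<Psi> (fst p))) p"
    by (rule isCont_o2[where f="\<lambda>p. \<Psi> (fst p)" and g=ee]) (auto intro: c1 isCont_ee)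
  show ?thesis unfolding S_def by (intro continuous_intros c1 c2)
qed

lemma isCont_T: "isCont T p"
proof -
  have c1: "isCont (\<lambda>p. \<Phi> (fst p)) p"
    by (rule isCont_o2[where f=fst and g=\<Phi>]) (auto intro: cont continuous_intros)
  have c2: "isCont (\<lambda>p. ee (fst p)) p"
    by (rule isCont_o2[where f="fst" and g=ee]) (auto intro: isCont_ee continuous_intros)
  show ?thesis unfolding T_def by (intro continuous_intros c1 c2)
qed

lemma T_image_eq: "T ` M = S -` M"
proof
  show "T ` M \<subseteq> S -` M" by auto
  show "S -` M \<subseteq> T ` M"
  proof
    fix p assume "p \<in> S -` M"
    then have "T (S p) \<in> T ` M" by blast
    then show "p \<in> T ` M" by simp
  qed
qed

lemma closed_T_image: "closed M \<Longrightarrow> closed (T ` M)"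
  unfolding T_image_eq
  by (rule closed_vimage) (auto intro: continuous_at_imp_continuous_on isCont_S)

lemma \<Psi>_plus1: "\<Psi> (y + 1) = \<Psi> y + 1"
proof -
  have "\<Phi> (\<Psi> y + 1) = y + 1" by (simp add: plus1)
  then have "\<Psi> (\<Phi> (\<Psi> y + 1)) = \<Psi> (y + 1)" by simp
  then show ?thesis by simp
qed

lemma S_per: "S (x + 1, z) = (fst (S (x, z)) + 1, snd (S (x, z)))"
  by (simp add: S_def \<Psi>_plus1 ee_1)

lemma T_per: "T (x + 1, z) = (fst (T (x, z)) + 1, snd (T (x, z)))"
  by (simp add: T_def plus1 ee_1)

lemma T_shift: "T (p + (0, c)) = T p + (0, c)"
  by (cases p) (simp add: T_def)

lemma per_T_image: assumes "per M" shows "per (T ` M)"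
  unfolding per_def
proof (intro allI)
  fix x z
  have e1: "(x, z) \<in> T ` M \<longleftrightarrow> S (x, z) \<in> M" using T_image_eq by auto
  have e2: "(x + 1, z) \<in> T ` M \<longleftrightarrow> S (x + 1, z) \<in> M" using T_image_eq by auto
  have "S (x, z) \<in> M \<longleftrightarrow> S (x + 1, z) \<in> M"
    using assms unfolding S_per per_def by (metis prod.collapse)
  then show "(x, z) \<in> T ` M \<longleftrightarrow> (x + 1, z) \<in> T ` M" using e1 e2 by simp
qed

end

locale circ_min = circ +
  assumes minimal: "minimal_lift \<Phi>"
begin

lemma GH:
  fixes x0 :: real
  defines "u \<equiv> \<lambda>n. (\<Phi> ^^ n) x0"
  assumes bnd: "bounded (range (curlicue_vertex u))"
  shows "\<exists>v. cohom_solution \<Phi> v"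
proof -
  let ?z = "curlicue_vertex u"
  obtain B where B: "\<And>n. norm (?z n) \<le> B" using bnd by (auto simp: bounded_iff)
  have zSuc: "?z (Suc n) = ?z n + ee (u n)" for n by (simp add: curlicue_vertex_def ee_def)
  have uSuc: "u (Suc n) = \<Phi> (u n)" for n by (simp add: u_def)
  define A where "A = {(u n + of_int k, ?z n) | n k. True}"
  define M0 where "M0 = closure A"
  have A_sub: "A \<subseteq> UNIV \<times> cball 0 B" using B by (auto simp: A_def)
  have M0_sub: "M0 \<subseteq> UNIV \<times> cball 0 B" unfolding M0_def
    by (rule closure_minimal[OF A_sub]) (simp add: closed_Times)
  have A_tr: "(+) (1, 0) ` A = A"
  proof
    show "(+) (1, 0) ` A \<subseteq> A"
    proof
      fix p assume "p \<in> (+) (1, 0) ` A"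
      then obtain n k where "p = (1, 0) + (u n + of_int k, ?z n)" unfolding A_def by blast
      then have "p = (u n + of_int (k + 1), ?z n)" by simp
      then show "p \<in> A" unfolding A_def by blast
    qed
    show "A \<subseteq> (+) (1, 0) ` A"
    proof
      fix p assume "p \<in> A"
      then obtain n k where p: "p = (u n + of_int k, ?z n)" unfolding A_def by blast
      have "(u n + of_int (k - 1), ?z n) \<in> A" unfolding A_def by blast
      moreover have "p = (1, 0) + (u n + of_int (k - 1), ?z n)" using p by simp
      ultimately show "p \<in> (+) (1, 0) ` A" by blast
    qed
  qed
  have M0_tr: "(+) (1, 0) ` M0 = M0" unfolding M0_def
    using closure_translation[of "(1::real, 0::complex)" A] A_tr by simp
  have M0_per: "per M0" unfolding per_def
  proof (intro allI iffI)
    fix x z assume "(x, z) \<in> M0"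
    then have "(1, 0) + (x, z) \<in> (+) (1, 0) ` M0" by blast
    then show "(x + 1, z) \<in> M0" using M0_tr by (simp add: add.commute)
  next
    fix x z assume "(x + 1, z) \<in> M0"
    then have "(x + 1, z) \<in> (+) (1, 0) ` M0" using M0_tr by simp
    then obtain q where "q \<in> M0" "(x + 1, z) = (1, 0) + q" by blast
    then show "(x, z) \<in> M0" by (cases q) simp
  qed
  have TA: "T ` A \<subseteq> A"
  proof
    fix p assume "p \<in> T ` A"
    then obtain q where q: "q \<in> A" "p = T q" by blast
    then obtain n k where p: "p = T (u n + of_int k, ?z n)" unfolding A_def by blast
    have "p = (u (Suc n) + of_int k, ?z (Suc n))"
      unfolding p T_def by (simp add: uSuc plus_int ee_int zSuc)
    then show "p \<in> A" unfolding A_def by blast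
  qed
  have TM0: "T ` M0 \<subseteq> M0" unfolding M0_def
  proof (rule image_closure_subset)
    show "continuous_on (closure A) T" by (intro continuous_at_imp_continuous_on) (auto intro: isCont_T)
    show "closed (closure A)" by simp
    show "T ` A \<subseteq> closure A" using TA closure_subset by blast
  qed
  have A_ne: "A \<noteq> {}" unfolding A_def by blast
  define F where "F = {M. M \<subseteq> M0 \<and> closed M \<and> M \<noteq> {} \<and> per M \<and> T ` M \<subseteq> M}"
  have M0F: "M0 \<in> F" unfolding F_def M0_def using A_ne TM0 M0_per
    by (auto simp: M0_def)
  define K where "K = ({0..1::real} \<times> cball (0::complex) B)"
  have K_comp: "compact K" unfolding K_def by (intro compact_Times) auto
  have meetK: "M \<inter> K \<noteq> {}" if "M \<in> F" for M
  proof -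
    from that obtain x z where xz: "(x, z) \<in> M" unfolding F_def by auto
    have "per M" using that unfolding F_def by auto
    then have "(x + of_int (- \<lfloor>x\<rfloor>), z) \<in> M" using xz per_int by blast
    moreover have "norm z \<le> B" using xz that M0_sub unfolding F_def by auto
    moreover have "0 \<le> x + of_int (- \<lfloor>x\<rfloor>)" "x + of_int (- \<lfloor>x\<rfloor>) \<le> 1"
      by (simp_all add: of_int_floor_le) linarith
    ultimately show ?thesis unfolding K_def by auto
  qed
  have "\<exists>M\<in>F. \<forall>X\<in>F. X \<subseteq> M \<longrightarrow> X = M"
  proof (rule Zorn_min)
    show "F \<noteq> {}" using M0F by blast
    fix C assume ch: "subset.chain F C" and Cne: "C \<noteq> {}"
    have CF: "C \<subseteq> F" using ch unfolding subset_chain_def by blast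
    have cmp: "X \<subseteq> Y \<or> Y \<subseteq> X" if "X \<in> C" "Y \<in> C" for X Y
      using ch that unfolding subset_chain_def by blast
    obtain M1 where M1: "M1 \<in> C" using Cne by blast
    have ne: "\<Inter>((\<lambda>M. M \<inter> K) ` C) \<noteq> {}"
    proof (rule bounded_closed_chain)
      show "M1 \<inter> K \<in> (\<lambda>M. M \<inter> K) ` C" using M1 by blast
      show "bounded (M1 \<inter> K)" using K_comp compact_imp_bounded bounded_Int by blast
      show "closed S" if "S \<in> (\<lambda>M. M \<inter> K) ` C" for S
        using that CF K_comp compact_imp_closed unfolding F_def by auto
      show "{} \<notin> (\<lambda>M. M \<inter> K) ` C" using meetK CF by fastforce
      show "S \<subseteq> T \<or> T \<subseteq> S" if "S \<in> (\<lambda>M. M \<inter> K) ` C \<and> T \<in> (\<lambda>M. M \<inter> K) ` C" for S T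
        using that cmp by blast
    qed
    show "\<Inter>C \<in> F" unfolding F_def
    proof (intro CollectI conjI)
      show "\<Inter>C \<subseteq> M0" using M1 CF unfolding F_def by blast
      show "closed (\<Inter>C)" using CF unfolding F_def by (intro closed_Inter) auto
      show "\<Inter>C \<noteq> {}" using ne by blast
      have pX: "per X" if "X \<in> C" for X using that CF unfolding F_def by auto
      show "per (\<Inter>C)" unfolding per_def
      proof (intro allI)
        fix x z
        show "((x, z) \<in> \<Inter>C) = ((x + 1, z) \<in> \<Inter>C)" using pX unfolding per_def by blast
      qed
      show "T ` \<Inter>C \<subseteq> \<Inter>C" using CF unfolding F_def by blast
    qed
  qed
  then obtain M where MF: "M \<in> F" and Mmin: "\<And>X. X \<in> F \<Longrightarrow> X \<subseteq> M \<Longrightarrow> X = M" by blast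
  have M_sub: "M \<subseteq> UNIV \<times> cball 0 B" "M \<subseteq> M0" and M_closed: "closed M" and M_ne: "M \<noteq> {}"
    and M_per: "per M" and TM: "T ` M \<subseteq> M"
    using MF M0_sub unfolding F_def by auto
  have TMeq: "T ` M = M"
  proof (rule Mmin)
    show "T ` M \<subseteq> M" by (rule TM)
    show "T ` M \<in> F" unfolding F_def
    proof (intro CollectI conjI)
      show "T ` M \<subseteq> M0" using TM M_sub(2) by (rule order_trans)
      show "closed (T ` M)" using M_closed by (rule closed_T_image)
      show "T ` M \<noteq> {}" using M_ne by simp
      show "per (T ` M)" using M_per by (rule per_T_image)
      show "T ` T ` M \<subseteq> T ` M" using TM by (rule image_mono)
    qed
  qed
  define P where "P = fst ` M"
  have "closedin (top_of_set (UNIV \<times> cball 0 B)) M" by (rule closed_subset[OF M_sub(1) M_closed])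
  then have "closedin (top_of_set UNIV) P" unfolding P_def
    by (rule Starlike.closed_map_fst[OF compact_cball])
  then have P_closed: "closed P" using closedin_closed_eq[OF closed_UNIV, of P] by blast
  have P_per: "\<forall>x. x \<in> P \<longleftrightarrow> x + 1 \<in> P"
  proof (intro allI iffI)
    fix x assume "x \<in> P"
    then obtain z where "(x, z) \<in> M" unfolding P_def by auto
    then have "(x + 1, z) \<in> M" using M_per unfolding per_def by blast
    then show "x + 1 \<in> P" unfolding P_def by (rule image_eqI[rotated]) simp
  next
    fix x assume "x + 1 \<in> P"
    then obtain z where "(x + 1, z) \<in> M" unfolding P_def by auto
    then have "(x, z) \<in> M" using M_per unfolding per_def by blast
    then show "x \<in> P" unfolding P_def by (rule image_eqI[rotated]) simp
  qed
  have "\<Phi> ` P = fst ` (T ` M)" unfolding P_def by (simp add: image_image T_def)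
  then have P_inv: "\<Phi> ` P = P" using TMeq P_def by simp
  have P_ne: "P \<noteq> {}" using M_ne P_def by blast
  have "closed P \<and> (\<forall>x. x \<in> P \<longleftrightarrow> x + 1 \<in> P) \<and> \<Phi> ` P = P \<longrightarrow> P = {} \<or> P = UNIV"
    using minimal unfolding minimal_lift_def by (rule spec)
  then have P_UNIV: "P = UNIV" using P_closed P_per P_inv P_ne by blast
  have ex: "\<exists>z. (x, z) \<in> M" for x
  proof -
    have "x \<in> fst ` M" using P_UNIV P_def by simp
    then obtain p where "p \<in> M" "x = fst p" by blast
    then show ?thesis by (intro exI[of _ "snd p"]) simp
  qed
  have uniq: "z1 = z2" if z1: "(x, z1) \<in> M" and z2: "(x, z2) \<in> M" for x z1 z2
  proof -
    define c where "c = z2 - z1"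
    define M' where "M' = M \<inter> (+) (0, c) ` M"
    have mem: "p \<in> (+) (0, c) ` M \<longleftrightarrow> p - (0, c) \<in> M" for p
    proof
      assume "p \<in> (+) (0, c) ` M" then show "p - (0, c) \<in> M" by auto
    next
      assume "p - (0, c) \<in> M"
      moreover have "p = (0, c) + (p - (0, c))" by simp
      ultimately show "p \<in> (+) (0, c) ` M" by blast
    qed
    have "M' \<in> F" unfolding F_def
    proof (intro CollectI conjI)
      show "M' \<subseteq> M0" using M_sub M'_def by blast
      show "closed M'" unfolding M'_def using M_closed by (intro closed_Int closed_translation)
      have "(x, z2) \<in> (+) (0, c) ` M" using mem[of "(x, z2)"] z1 by (simp add: c_def)
      then show "M' \<noteq> {}" using z2 M'_def by blast
      have mem': "(a, w) \<in> (+) (0, c) ` M \<longleftrightarrow> (a, w - c) \<in> M" for a w using mem[of "(a, w)"] by simp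
      show "per M'" using M_per unfolding per_def M'_def Int_iff mem' by blast
      show "T ` M' \<subseteq> M'"
      proof
        fix q assume "q \<in> T ` M'"
        then obtain p where p0: "p \<in> M'" and q: "q = T p" by blast
        have pM: "p \<in> M" using p0 unfolding M'_def by blast
        have pM': "p - (0, c) \<in> M" using p0 mem[of p] unfolding M'_def by blast
        have pp: "p - (0, c) + (0, c) = p" by (rule diff_add_cancel)
        have h: "T p = T (p - (0, c)) + (0, c)" using T_shift[of "p - (0, c)" c] by (simp only: pp)
        have "q - (0, c) = T (p - (0, c))" unfolding q h by (rule add_diff_cancel)
        then have "q - (0, c) \<in> M" using TM pM' by blast
        moreover have "q \<in> M" using TM pM q by blast
        ultimately show "q \<in> M'" unfolding M'_def using mem[of q] by blast
      qed
    qed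
    then have "M' = M" using Mmin unfolding M'_def by blast
    then have down: "(a, w - c) \<in> M" if "(a, w) \<in> M" for a w
    proof -
      have "(a, w) \<in> M'" using that \<open>M' = M\<close> by simp
      then have "(a, w) - (0, c) \<in> M" using mem[of "(a, w)"] unfolding M'_def by blast
      then show ?thesis by simp
    qed
    have it: "(x, z2 - of_nat k * c) \<in> M" for k
    proof (induction k)
      case 0 then show ?case using z2 by simp
    next
      case (Suc k)
      then have "(x, z2 - of_nat k * c - c) \<in> M" by (rule down)
      then show ?case by (simp add: algebra_simps)
    qed
    have bd: "of_nat k * norm c \<le> 2 * B" for k
    proof -
      have "norm (z2 - of_nat k * c) \<le> B" using it[of k] M_sub by auto
      moreover have "norm z2 \<le> B" using z2 M_sub by auto
      moreover have "norm (of_nat k * c) \<le> norm z2 + norm (z2 - of_nat k * c)"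
      proof -
        have "of_nat k * c = z2 - (z2 - of_nat k * c)" by simp
        then show ?thesis using norm_triangle_ineq4[of z2 "z2 - of_nat k * c"] by simp
      qed
      ultimately show ?thesis by (simp add: norm_mult)
    qed
    show "z1 = z2"
    proof (rule ccontr)
      assume "z1 \<noteq> z2"
      then have "0 < norm c" unfolding c_def by simp
      then obtain k where "2 * B < of_nat k * norm c" using reals_Archimedean3 by blast
      then show False using bd[of k] by simp
    qed
  qed
  define v where "v x = (THE z. (x, z) \<in> M)" for x
  have vM: "(x, v x) \<in> M" for x
  proof -
    obtain z where z: "(x, z) \<in> M" using ex by blast
    show ?thesis unfolding v_def
      by (rule theI[of "\<lambda>z. (x, z) \<in> M" z]) (use z uniq in auto)
  qed
  have v_eq: "v x = z" if "(x, z) \<in> M" for x z using vM uniq that by blast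
  have graph: "(\<lambda>x. (x, v x)) ` UNIV = M"
  proof
    show "(\<lambda>x. (x, v x)) ` UNIV \<subseteq> M" using vM by auto
    show "M \<subseteq> (\<lambda>x. (x, v x)) ` UNIV"
    proof
      fix p assume "p \<in> M"
      then have "v (fst p) = snd p" using v_eq by (cases p) simp
      then have "p = (fst p, v (fst p))" by simp
      then show "p \<in> (\<lambda>x. (x, v x)) ` UNIV" by (rule image_eqI) simp
    qed
  qed
  have vB: "v \<in> UNIV \<rightarrow> cball 0 B" using vM M_sub by auto
  have v_cont: "continuous_on UNIV v"
    by (rule continuous_from_closed_graph[OF compact_cball vB]) (simp only: graph M_closed)
  have v_per: "v (x + 1) = v x" for x
    using vM[of x] M_per unfolding per_def by (auto intro: v_eq)
  have v_coh: "ee x + v x = v (\<Phi> x)" for x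
  proof -
    have "T (x, v x) \<in> M" using vM TM by blast
    then have "(\<Phi> x, v x + ee x) \<in> M" by (simp add: T_def)
    then show ?thesis using v_eq by (simp add: add.commute)
  qed
  show ?thesis unfolding cohom_solution_def
    using v_cont v_per v_coh by (auto simp: ee_def)
qed

end



lemma eps_nbhd_UN: "eps_nbhd G e = (\<Union>x\<in>G. ball x e)"
  unfolding eps_nbhd_def by (auto simp: ball_def)

lemma meas_lb:
  fixes G :: "complex set" and p :: "'i \<Rightarrow> complex"
  assumes bG: "bounded G" and e: "0 < e" and fin: "finite Ix"
    and pG: "\<And>i. i \<in> Ix \<Longrightarrow> p i \<in> G"
    and sep: "\<And>i j. i \<in> Ix \<Longrightarrow> j \<in> Ix \<Longrightarrow> i \<noteq> j \<Longrightarrow> 2 * e \<le> dist (p i) (p j)"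
  shows "real (card Ix) * e^2 \<le> measure lborel (eps_nbhd G e)"
proof -
  define c where "c = Complex (e/2) (e/2)"
  define bx where "bx i = box (p i - c) (p i + c)" for i
  have bx_ball: "bx i \<subseteq> ball (p i) e" for i
  proof
    fix y assume "y \<in> bx i"
    then have "Re (p i - c) < Re y \<and> Re y < Re (p i + c) \<and> Im (p i - c) < Im y \<and> Im y < Im (p i + c)"
      unfolding bx_def mem_box Basis_complex_def by (simp add: inner_complex_def)
    then have h: "Re (p i) - e/2 < Re y" "Re y < Re (p i) + e/2" "Im (p i) - e/2 < Im y" "Im y < Im (p i) + e/2"
      by (simp_all add: c_def)
    have "\<bar>Re y - Re (p i)\<bar> < e/2" using h(1,2) by arith
    moreover have "\<bar>Im y - Im (p i)\<bar> < e/2" using h(3,4) by arith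
    ultimately have "\<bar>Re (y - p i)\<bar> < e/2" "\<bar>Im (y - p i)\<bar> < e/2" by simp_all
    then have "cmod (y - p i) < e" using cmod_le[of "y - p i"] by linarith
    then show "y \<in> ball (p i) e" by (simp add: dist_norm norm_minus_commute)
  qed
  have meas_bx: "measure lborel (bx i) = e^2" for i
    unfolding bx_def measure_lborel_box_eq using e
    by (simp add: Basis_complex_def c_def power2_eq_square inner_complex_def)
  have disj: "disjoint_family_on bx Ix"
    unfolding disjoint_family_on_def
  proof (intro ballI impI)
    fix i j assume i: "i \<in> Ix" and j: "j \<in> Ix" and ij: "i \<noteq> j"
    show "bx i \<inter> bx j = {}"
    proof (rule ccontr)
      assume "bx i \<inter> bx j \<noteq> {}"
      then obtain y where y: "y \<in> ball (p i) e" "y \<in> ball (p j) e" using bx_ball by blast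
      have "dist (p i) (p j) \<le> dist (p i) y + dist (p j) y" by (rule dist_triangle2)
      then have "dist (p i) (p j) < 2 * e" using y by simp
      then show False using sep[OF i j ij] by simp
    qed
  qed
  have U_sub: "(\<Union>i\<in>Ix. bx i) \<subseteq> eps_nbhd G e"
    using bx_ball pG unfolding eps_nbhd_UN by blast
  have "measure lborel (\<Union>i\<in>Ix. bx i) = (\<Sum>i\<in>Ix. measure lborel (bx i))"
  proof (rule measure_finite_Union[OF fin])
    show "bx ` Ix \<subseteq> sets lborel" unfolding bx_def by auto
    show "disjoint_family_on bx Ix" by (rule disj)
    show "emeasure lborel (bx i) \<noteq> \<infinity>" for i
      using emeasure_bounded_finite[of "bx i"] unfolding bx_def by simp
  qed
  then have meas_U: "measure lborel (\<Union>i\<in>Ix. bx i) = real (card Ix) * e^2"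
    by (simp add: meas_bx)
  have fm: "eps_nbhd G e \<in> fmeasurable lborel"
  proof (rule fmeasurableI)
    show "eps_nbhd G e \<in> sets lborel" unfolding eps_nbhd_UN unfolding sets_lborel by (intro borel_open open_UN) auto
    obtain a where a: "\<And>x. x \<in> G \<Longrightarrow> norm x \<le> a" using bG unfolding bounded_iff by blast
    have "eps_nbhd G e \<subseteq> cball 0 (a + e)"
    proof
      fix y assume "y \<in> eps_nbhd G e"
      then obtain x where "x \<in> G" "dist x y < e" unfolding eps_nbhd_def by blast
      then have "norm x \<le> a" "norm (y - x) < e" using a by (auto simp: dist_norm norm_minus_commute)
      then have "norm y \<le> a + e" using norm_triangle_ineq[of x "y - x"] by simp
      then show "y \<in> cball 0 (a + e)" by simp
    qed
    then have "bounded (eps_nbhd G e)" using bounded_cball bounded_subset by blast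
    then show "emeasure lborel (eps_nbhd G e) < \<infinity>" by (rule emeasure_bounded_finite)
  qed
  have "(\<Union>i\<in>Ix. bx i) \<in> sets lborel" unfolding bx_def unfolding sets_lborel by (intro borel_open open_UN) auto
  then show ?thesis using measure_mono_fmeasurable[OF U_sub _ fm] meas_U by simp
qed

lemma np_unique:
  fixes za zb da db :: complex
  assumes np: "Im (da * cnj db) \<noteq> 0"
    and e1: "za + of_real t * da = zb + of_real s * db" and e2: "za + of_real t' * da = zb + of_real s' * db"
  shows "t = t'"
proof -
  have "(za + of_real t * da) - (za + of_real t' * da) = (zb + of_real s * db) - (zb + of_real s' * db)"
    using e1 e2 by simp
  then have "of_real (t - t') * da = of_real (s - s') * db" by (simp add: algebra_simps)
  then have "of_real (t - t') * da * cnj db = of_real (s - s') * db * cnj db"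
    by (rule arg_cong[where f="\<lambda>x. x * cnj db"])
  then have "of_real (t - t') * (da * cnj db) = of_real (s - s') * (db * cnj db)" by (simp only: mult.assoc)
  then have eq: "Im (of_real (t - t') * (da * cnj db)) = Im (of_real (s - s') * (db * cnj db))" by (rule arg_cong)
  have l: "Im (of_real (t - t') * (da * cnj db)) = (t - t') * Im (da * cnj db)" by simp
  have "db * cnj db = of_real ((Re db)\<^sup>2 + (Im db)\<^sup>2)" by (rule complex_mult_cnj)
  then have r: "Im (of_real (s - s') * (db * cnj db)) = 0" by simp
  have "(t - t') * Im (da * cnj db) = 0" using eq l r by simp
  then show ?thesis using np by simp
qed

lemma curlicue_seg:
  assumes "0 \<le> t" "t < 1"
  shows "curlicue_vertex u n + of_real t * ee (u n) \<in> curlicue u"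
proof -
  have fl: "\<lfloor>real n + t\<rfloor> = int n" using assms by (simp add: floor_eq_iff)
  have "curlicue_path u (real n + t) = curlicue_vertex u n + of_real t * ee (u n)"
    unfolding curlicue_path_def fl ee_def by simp
  moreover have "real n + t \<in> {0..}" using assms by simp
  ultimately show ?thesis unfolding curlicue_def by (metis image_eqI)
qed



lemma superficial_core:
  fixes u :: "nat \<Rightarrow> real"
  assumes bnd: "bounded (curlicue u)"
    and sel: "\<And>N. \<exists>I. finite I \<and> card I = N \<and> (\<forall>a\<in>I. \<forall>b\<in>I. a \<noteq> b \<longrightarrow> Im (ee (u a) * cnj (ee (u b))) \<noteq> 0)"
  shows "filterlim (\<lambda>\<epsilon>. measure lborel (eps_nbhd (curlicue u) \<epsilon>) / \<epsilon>) at_top (at_right 0)"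
  unfolding filterlim_at_top
proof (intro allI)
  fix Z :: real
  define N where "N = nat \<lceil>8 * Z\<rceil> + 1"
  have N1: "1 \<le> N" unfolding N_def by simp
  have NZ: "Z \<le> real N / 8"
  proof -
    have "8 * Z \<le> real (nat \<lceil>8 * Z\<rceil>)" by (rule real_nat_ceiling_ge)
    then show ?thesis unfolding N_def by simp
  qed
  have Npos: "0 < real N" using N1 by simp
  obtain I where I: "finite I" "card I = N"
    and np: "\<And>a b. a \<in> I \<Longrightarrow> b \<in> I \<Longrightarrow> a \<noteq> b \<Longrightarrow> Im (ee (u a) * cnj (ee (u b))) \<noteq> 0"
    using sel[of N] by blast
  define z where "z = curlicue_vertex u"
  define d where "d n = ee (u n)" for n
  define pt where "pt n t = z n + of_real t * d n" for n t
  define L where "L = 1 / (4 * real N)"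
  define lo where "lo k = real (2*k) / (4 * real N)" for k
  define hi where "hi k = lo k + L" for k
  define piece where "piece a k = pt a ` {lo k .. hi k}" for a k
  define seg where "seg b = pt b ` {0..1}" for b
  define good where "good a k \<longleftrightarrow> (\<forall>b\<in>I. b \<noteq> a \<longrightarrow> piece a k \<inter> seg b = {})" for a k
  define G where "G = (SIGMA a:I. {k. k < 2*N \<and> good a k})"
  have Lpos: "0 < L" unfolding L_def using Npos by simp
  have pt_in: "pt n t \<in> curlicue u" if "0 \<le> t" "t < 1" for n t
    unfolding pt_def z_def d_def using curlicue_seg[OF that] by simp
  have norm_d: "norm (d n) = 1" for n unfolding d_def by (rule norm_ee)
  have lo_nonneg: "0 \<le> lo k" for k unfolding lo_def by simp
  have hi_lt1: "hi k < 1" if "k < 2*N" for k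
  proof -
    have "real (2*k) + 1 < 4 * real N" using that by linarith
    then have "(real (2*k) + 1) / (4 * real N) < 1" using Npos by simp
    moreover have "hi k = (real (2*k) + 1) / (4 * real N)" unfolding hi_def lo_def L_def by (simp add: add_divide_distrib)
    ultimately show ?thesis by simp
  qed
  have lohi_disj: "k = k'" if "t \<in> {lo k..hi k}" "t \<in> {lo k'..hi k'}" for k k' t
  proof -
    have "hi k = (real (2*k) + 1) / (4 * real N)" "hi k' = (real (2*k') + 1) / (4 * real N)"
      unfolding hi_def lo_def L_def by (simp_all add: add_divide_distrib)
    then have "real (2*k) \<le> t * (4 * real N)" "t * (4 * real N) \<le> real (2*k) + 1"
      "real (2*k') \<le> t * (4 * real N)" "t * (4 * real N) \<le> real (2*k') + 1"
      using that Npos unfolding lo_def by (simp_all add: pos_divide_le_eq pos_le_divide_eq)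
    then show "k = k'" by linarith
  qed
  have same_seg: "t = t'" if "pt a t = pt a t'" for a t t'
  proof -
    have "d a \<noteq> 0" using norm_d[of a] by auto
    then show ?thesis using that unfolding pt_def by simp
  qed
  have piece_sub: "piece a k \<subseteq> seg a" if "k < 2*N" for a k
    unfolding piece_def seg_def using lo_nonneg[of k] hi_lt1[OF that] by (intro image_mono) auto
  have bad_card: "card {k. k < 2*N \<and> piece a k \<inter> seg b \<noteq> {}} \<le> 1"
    if ab: "a \<in> I" "b \<in> I" "a \<noteq> b" for a b
  proof -
    have "\<forall>k1\<in>{k. k < 2*N \<and> piece a k \<inter> seg b \<noteq> {}}. \<forall>k2\<in>{k. k < 2*N \<and> piece a k \<inter> seg b \<noteq> {}}. k1 = k2"
    proof (intro ballI)
      fix k1 k2 assume k1: "k1 \<in> {k. k < 2*N \<and> piece a k \<inter> seg b \<noteq> {}}"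
        and k2: "k2 \<in> {k. k < 2*N \<and> piece a k \<inter> seg b \<noteq> {}}"
      obtain t1 s1 where t1: "t1 \<in> {lo k1..hi k1}" "pt a t1 = pt b s1"
        using k1 unfolding piece_def seg_def by blast
      obtain t2 s2 where t2: "t2 \<in> {lo k2..hi k2}" "pt a t2 = pt b s2"
        using k2 unfolding piece_def seg_def by blast
      have "t1 = t2"
        using np_unique[OF np[OF ab], of "z a" "t1" "z b" s1 t2 s2] t1(2) t2(2)
        unfolding pt_def d_def by simp
      then show "k1 = k2" using lohi_disj t1(1) t2(1) by blast
    qed
    moreover have "finite {k. k < 2*N \<and> piece a k \<inter> seg b \<noteq> {}}" by simp
    ultimately have "card {k. k < 2*N \<and> piece a k \<inter> seg b \<noteq> {}} \<le> Suc 0"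
      using card_le_Suc0_iff_eq by blast
    then show ?thesis by simp
  qed
  have good_card: "N + 1 \<le> card {k. k < 2*N \<and> good a k}" if a: "a \<in> I" for a
  proof -
    have sub: "{k. k < 2*N \<and> \<not> good a k} \<subseteq> (\<Union>b\<in>I - {a}. {k. k < 2*N \<and> piece a k \<inter> seg b \<noteq> {}})"
      unfolding good_def by auto
    have "card (\<Union>b\<in>I - {a}. {k. k < 2*N \<and> piece a k \<inter> seg b \<noteq> {}}) \<le> (\<Sum>b\<in>I - {a}. card {k. k < 2*N \<and> piece a k \<inter> seg b \<noteq> {}})"
      using I(1) by (intro card_UN_le) simp
    also have "\<dots> \<le> (\<Sum>b\<in>I - {a}. 1)" using bad_card a by (intro sum_mono) auto
    also have "\<dots> = N - 1" using I a by simp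
    finally have cU: "card (\<Union>b\<in>I - {a}. {k. k < 2*N \<and> piece a k \<inter> seg b \<noteq> {}}) \<le> N - 1" .
    have "finite (\<Union>b\<in>I - {a}. {k. k < 2*N \<and> piece a k \<inter> seg b \<noteq> {}})" using I(1) by simp
    then have "card {k. k < 2*N \<and> \<not> good a k} \<le> N - 1"
      using card_mono[OF _ sub] cU by linarith
    moreover have "{k. k < 2*N \<and> good a k} = {..<2*N} - {k. k < 2*N \<and> \<not> good a k}" by auto
    moreover have "card ({..<2*N} - {k. k < 2*N \<and> \<not> good a k}) = 2*N - card {k. k < 2*N \<and> \<not> good a k}"
      using card_Diff_subset[of "{k. k < 2*N \<and> \<not> good a k}" "{..<2*N}"] by auto
    ultimately show ?thesis using N1 by simp
  qed
  have finG: "finite G" unfolding G_def using I(1) by auto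
  have cardG: "real N * real N \<le> real (card G)"
  proof -
    have "card G = (\<Sum>a\<in>I. card {k. k < 2*N \<and> good a k})" unfolding G_def using I(1) by simp
    moreover have "card I * (N + 1) \<le> (\<Sum>a\<in>I. card {k. k < 2*N \<and> good a k})"
      using sum_bounded_below[of I "N + 1" "\<lambda>a. card {k. k < 2*N \<and> good a k}"] good_card by simp
    ultimately have "N * (N + 1) \<le> card G" using I(2) by simp
    then have "N * N \<le> card G" by (meson le_trans mult_le_mono2 le_add1)
    then show ?thesis by (metis of_nat_le_iff of_nat_mult)
  qed
  have piece_compact: "compact (piece a k)" for a k
    unfolding piece_def pt_def by (intro compact_continuous_image continuous_intros) auto
  have piece_ne: "piece a k \<noteq> {}" for a k
    unfolding piece_def hi_def using Lpos by auto
  have piece_disj: "piece a k \<inter> piece a' k' = {}" if g: "(a, k) \<in> G" "(a', k') \<in> G" "(a, k) \<noteq> (a', k')" for a k a' k'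
  proof (cases "a = a'")
    case True
    then have kk: "k \<noteq> k'" using g by simp
    show ?thesis
    proof (rule ccontr)
      assume "piece a k \<inter> piece a' k' \<noteq> {}"
      then obtain t t' where "t \<in> {lo k..hi k}" "t' \<in> {lo k'..hi k'}" "pt a t = pt a t'"
        unfolding piece_def True by blast
      then show False using same_seg lohi_disj kk by metis
    qed
  next
    case False
    have "good a k" "a' \<in> I" "k' < 2*N" using g unfolding G_def by auto
    then have "piece a k \<inter> seg a' = {}" using False unfolding good_def by auto
    then show ?thesis using piece_sub[OF \<open>k' < 2*N\<close>, of a'] by blast
  qed
  define PP where "PP = {(g, g'). g \<in> G \<and> g' \<in> G \<and> g \<noteq> g'}"
  have finPP: "finite PP"
  proof (rule finite_subset)
    show "PP \<subseteq> G \<times> G" unfolding PP_def by auto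
    show "finite (G \<times> G)" using finG by simp
  qed
  define sd where "sd gg = setdist (piece (fst (fst gg)) (snd (fst gg))) (piece (fst (snd gg)) (snd (snd gg)))" for gg
  have sd_pos: "0 < sd gg" if "gg \<in> PP" for gg
  proof -
    obtain a k a' k' where gg: "gg = ((a, k), (a', k'))" by (metis prod.collapse)
    have "piece a k \<inter> piece a' k' = {}" using that piece_disj unfolding PP_def gg by auto
    then have "setdist (piece a k) (piece a' k') \<noteq> 0"
      using setdist_eq_0_compact_closed[OF piece_compact compact_imp_closed[OF piece_compact]] piece_ne by auto
    moreover have "0 \<le> setdist (piece a k) (piece a' k')" by (rule setdist_pos_le)
    ultimately have "0 < setdist (piece a k) (piece a' k')" by (simp add: less_le)
    then show ?thesis unfolding sd_def gg by simp
  qed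
  have ev1: "\<forall>\<^sub>F \<epsilon> in at_right 0. \<forall>gg\<in>PP. 2 * \<epsilon> < sd gg"
  proof (rule eventually_ball_finite[OF finPP], intro ballI)
    fix gg assume "gg \<in> PP"
    then have "0 < sd gg / 2" using sd_pos by simp
    then show "\<forall>\<^sub>F \<epsilon> in at_right 0. 2 * \<epsilon> < sd gg"
      unfolding eventually_at_right_field by (intro exI[of _ "sd gg / 2"]) auto
  qed
  show "\<forall>\<^sub>F \<epsilon> in at_right 0. Z \<le> measure lborel (eps_nbhd (curlicue u) \<epsilon>) / \<epsilon>"
    using ev1 eventually_at_right_less[of "0::real"]
  proof eventually_elim
    case (elim \<epsilon>)
    then have e: "0 < \<epsilon>" and sepP: "\<And>gg. gg \<in> PP \<Longrightarrow> 2 * \<epsilon> < sd gg" by auto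
    define J where "J = nat \<lfloor>L / (2 * \<epsilon>)\<rfloor>"
    have J_le: "2 * \<epsilon> * real J \<le> L"
    proof -
      have "real J \<le> L / (2 * \<epsilon>)" unfolding J_def using Lpos e by simp
      then show ?thesis using e by (simp add: pos_le_divide_eq mult.commute)
    qed
    have J_ge: "L / (2 * \<epsilon>) \<le> real J + 1" unfolding J_def using Lpos e by linarith
    define Ix where "Ix = G \<times> {..J}"
    define p where "p i = pt (fst (fst i)) (lo (snd (fst i)) + 2 * \<epsilon> * real (snd i))" for i
    have tt: "lo k \<le> lo k + 2 * \<epsilon> * real j \<and> lo k + 2 * \<epsilon> * real j \<le> hi k" if "j \<le> J" for k j
    proof -
      have h1: "2 * \<epsilon> * real j \<le> 2 * \<epsilon> * real J" using that e by simp
      have h2: "0 \<le> 2 * \<epsilon> * real j" using e by simp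
      show ?thesis using J_le h1 h2 unfolding hi_def by linarith
    qed
    have p_piece: "p i \<in> piece (fst (fst i)) (snd (fst i))" if "i \<in> Ix" for i
      using that tt unfolding p_def piece_def Ix_def by auto
    have p_in: "p i \<in> curlicue u" if "i \<in> Ix" for i
    proof -
      have "snd (fst i) < 2 * N" "snd i \<le> J" using that unfolding Ix_def G_def by auto
      then have h: "lo (snd (fst i)) \<le> lo (snd (fst i)) + 2 * \<epsilon> * real (snd i)"
          "lo (snd (fst i)) + 2 * \<epsilon> * real (snd i) \<le> hi (snd (fst i))" "hi (snd (fst i)) < 1"
        using tt[of "snd i" "snd (fst i)"] hi_lt1 by auto
      have "0 \<le> lo (snd (fst i))" by (rule lo_nonneg)
      then show ?thesis unfolding p_def using h by (intro pt_in) linarith+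
    qed
    have sep: "2 * \<epsilon> \<le> dist (p i) (p j)" if ij: "i \<in> Ix" "j \<in> Ix" "i \<noteq> j" for i j
    proof (cases "fst i = fst j")
      case True
      then have sj: "snd i \<noteq> snd j" using ij by (metis prod.collapse)
      obtain a k where ak: "fst i = (a, k)" by (metis prod.collapse)
      have f: "fst (fst i) = a" "fst (fst j) = a" "snd (fst i) = k" "snd (fst j) = k"
        using True ak by (metis fst_conv, metis fst_conv, metis snd_conv, metis snd_conv)
      have "p i - p j = of_real (2 * \<epsilon> * (real (snd i) - real (snd j))) * d a"
        unfolding p_def pt_def f by (simp add: algebra_simps)
      then have "dist (p i) (p j) = norm (of_real (2 * \<epsilon> * (real (snd i) - real (snd j))) * d a)"
        by (simp only: dist_norm)
      also have "\<dots> = \<bar>2 * \<epsilon> * (real (snd i) - real (snd j))\<bar>"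
        by (simp only: norm_mult norm_of_real norm_d mult_1_right)
      also have "\<dots> = 2 * \<epsilon> * \<bar>real (snd i) - real (snd j)\<bar>" using e by (simp add: abs_mult)
      finally have "dist (p i) (p j) = 2 * \<epsilon> * \<bar>real (snd i) - real (snd j)\<bar>" .
      moreover have "1 \<le> \<bar>real (snd i) - real (snd j)\<bar>" using sj by linarith
      ultimately show ?thesis using e by simp
    next
      case False
      have "(fst i, fst j) \<in> PP" using ij False unfolding PP_def Ix_def by auto
      then have "2 * \<epsilon> < sd (fst i, fst j)" by (rule sepP)
      also have "sd (fst i, fst j) \<le> dist (p i) (p j)"
        unfolding sd_def using p_piece[OF ij(1)] p_piece[OF ij(2)] by (simp add: setdist_le_dist)
      finally show ?thesis by simp
    qed
    have finIx: "finite Ix" unfolding Ix_def using finG by simp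
    have mlb: "real (card Ix) * \<epsilon>^2 \<le> measure lborel (eps_nbhd (curlicue u) \<epsilon>)"
      by (rule meas_lb[OF bnd e finIx p_in sep])
    have cIx: "real (card Ix) = real (card G) * (real J + 1)"
      unfolding Ix_def by (simp add: card_cartesian_product algebra_simps)
    have "real N / 8 = real N * real N * (L / (2 * \<epsilon>)) * \<epsilon>"
      unfolding L_def using e Npos by (simp add: field_simps)
    also have "\<dots> \<le> real (card G) * (real J + 1) * \<epsilon>"
      using cardG J_ge e Lpos Npos by (intro mult_right_mono mult_mono) auto
    also have "\<dots> = real (card Ix) * \<epsilon>^2 / \<epsilon>" using e cIx by (simp add: power2_eq_square)
    also have "\<dots> \<le> measure lborel (eps_nbhd (curlicue u) \<epsilon>) / \<epsilon>"
      using mlb e by (simp add: divide_right_mono)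
    finally have "real N / 8 \<le> measure lborel (eps_nbhd (curlicue u) \<epsilon>) / \<epsilon>" .
    then show ?case using NZ by linarith
  qed
qed



lemma vertex_Suc: "curlicue_vertex u (Suc n) = curlicue_vertex u n + ee (u n)"
  by (simp add: curlicue_vertex_def ee_def)

lemma bounded_curlicue_iff: "bounded (curlicue u) \<longleftrightarrow> bounded (range (curlicue_vertex u))"
proof
  assume b: "bounded (curlicue u)"
  have "range (curlicue_vertex u) \<subseteq> curlicue u"
  proof
    fix y assume "y \<in> range (curlicue_vertex u)"
    then obtain n where y: "y = curlicue_vertex u n" by blast
    have "curlicue_path u (real n) = curlicue_vertex u n" unfolding curlicue_path_def by simp
    then show "y \<in> curlicue u" unfolding curlicue_def y by (metis atLeast_iff image_eqI of_nat_0_le_iff)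
  qed
  then show "bounded (range (curlicue_vertex u))" using b bounded_subset by blast
next
  assume "bounded (range (curlicue_vertex u))"
  then obtain B where B: "\<And>n. norm (curlicue_vertex u n) \<le> B" unfolding bounded_iff by blast
  have "curlicue u \<subseteq> cball 0 (B + 1)"
  proof
    fix y assume "y \<in> curlicue u"
    then obtain t where y: "y = curlicue_path u t" unfolding curlicue_def by blast
    have y': "y = curlicue_vertex u (nat \<lfloor>t\<rfloor>) + of_real (t - of_int \<lfloor>t\<rfloor>) * ee (u (nat \<lfloor>t\<rfloor>))"
      unfolding y curlicue_path_def ee_def by simp
    have "norm (of_real (t - of_int \<lfloor>t\<rfloor>) * ee (u (nat \<lfloor>t\<rfloor>))) = \<bar>t - of_int \<lfloor>t\<rfloor>\<bar>"
      by (simp only: norm_mult norm_of_real norm_ee mult_1_right)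
    also have "\<dots> \<le> 1" by linarith
    finally have n1: "norm (of_real (t - of_int \<lfloor>t\<rfloor>) * ee (u (nat \<lfloor>t\<rfloor>))) \<le> 1" .
    show "y \<in> cball 0 (B + 1)" unfolding y' mem_cball dist_0_norm
      using B[of "nat \<lfloor>t\<rfloor>"] n1
        norm_triangle_ineq[of "curlicue_vertex u (nat \<lfloor>t\<rfloor>)" "of_real (t - of_int \<lfloor>t\<rfloor>) * ee (u (nat \<lfloor>t\<rfloor>))"]
      by linarith
  qed
  then show "bounded (curlicue u)" using bounded_cball bounded_subset by blast
qed

lemma per_fun_int:
  assumes "\<And>x. f (x + 1) = f x"
  shows "f (x + of_int k) = f x"
proof -
  have nat: "f (y + of_nat n) = f y" for y n
  proof (induction n)
    case (Suc n)
    have "f (y + of_nat (Suc n)) = f ((y + of_nat n) + 1)" by (simp add: algebra_simps)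
    also have "\<dots> = f (y + of_nat n)" by (rule assms)
    finally show ?case using Suc by simp
  qed simp
  show ?thesis
  proof (cases "k \<ge> 0")
    case True then obtain n where "k = int n" using nonneg_eq_int by blast
    then show ?thesis using nat by simp
  next
    case False
    define n where "n = nat (- k)"
    have k: "k = - int n" using False unfolding n_def by simp
    have "f ((x - of_nat n) + of_nat n) = f (x - of_nat n)" by (rule nat)
    then show ?thesis using k by simp
  qed
qed

lemma cohom_bounded:
  assumes "cohom_solution \<Phi> v"
  shows "bounded (range v)"
proof -
  have c: "continuous_on UNIV v" and p: "\<And>x. v (x + 1) = v x" using assms unfolding cohom_solution_def by auto
  have "range v \<subseteq> v ` {0..1}"
  proof
    fix y assume "y \<in> range v"
    then obtain x where y: "y = v x" by blast
    have "v (x + of_int (- \<lfloor>x\<rfloor>)) = v x" by (rule per_fun_int[where f=v, OF p])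
    moreover have "x + of_int (- \<lfloor>x\<rfloor>) \<in> {0..1}" by simp linarith
    ultimately show "y \<in> v ` {0..1}" unfolding y by (metis image_eqI)
  qed
  moreover have "compact (v ` {0..1})" by (rule compact_continuous_image) (use c in \<open>auto intro: continuous_on_subset\<close>)
  ultimately show ?thesis using compact_imp_bounded bounded_subset by blast
qed

lemma cohom_vertex:
  assumes "cohom_solution \<Phi> v"
  shows "curlicue_vertex (\<lambda>n. (\<Phi> ^^ n) x0) n = v ((\<Phi> ^^ n) x0) - v x0"
proof (induction n)
  case 0 then show ?case by (simp add: curlicue_vertex_def)
next
  case (Suc n)
  have "v ((\<Phi> ^^ Suc n) x0) = ee ((\<Phi> ^^ n) x0) + v ((\<Phi> ^^ n) x0)"
    using assms unfolding cohom_solution_def ee_def by simp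
  then show ?case using Suc by (simp add: vertex_Suc)
qed

context circ_min
begin

lemma no_periodic:
  assumes p: "0 < p" and per: "(\<Phi> ^^ p) w = w + of_int k"
  shows False
proof -
  define E where "E j = range (\<lambda>l::int. (\<Phi> ^^ j) w + of_int l)" for j
  define C where "C = (\<Union>j<p. E j)"
  have memC: "y \<in> C \<longleftrightarrow> (\<exists>j<p. \<exists>l::int. y = (\<Phi> ^^ j) w + of_int l)" for y
    unfolding C_def E_def by blast
  have closedE: "closed (E j)" for j
  proof (rule discrete_imp_closed[of 1])
    show "\<forall>x\<in>E j. \<forall>y\<in>E j. dist y x < 1 \<longrightarrow> y = x"
    proof (intro ballI impI)
      fix x y assume "x \<in> E j" "y \<in> E j" "dist y x < 1"
      then obtain l1 l2 :: int where "x = (\<Phi> ^^ j) w + of_int l1" "y = (\<Phi> ^^ j) w + of_int l2" "dist y x < 1"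
        unfolding E_def by blast
      then have "\<bar>of_int l2 - of_int l1 :: real\<bar> < 1" by (simp add: dist_real_def)
      then have "l1 = l2" by linarith
      then show "y = x" using \<open>x = _\<close> \<open>y = _\<close> by simp
    qed
  qed simp
  have closedC: "closed C" unfolding C_def using closedE by (intro closed_UN) auto
  have perC: "\<forall>x. x \<in> C \<longleftrightarrow> x + 1 \<in> C"
  proof (intro allI iffI)
    fix x assume "x \<in> C"
    then obtain j l where "j < p" "x = (\<Phi> ^^ j) w + of_int l" unfolding memC by blast
    then have "x + 1 = (\<Phi> ^^ j) w + of_int (l + 1)" "j < p" by simp_all
    then show "x + 1 \<in> C" unfolding memC by blast
  next
    fix x assume "x + 1 \<in> C"
    then obtain j l where "j < p" "x + 1 = (\<Phi> ^^ j) w + of_int l" unfolding memC by blast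
    then have "x = (\<Phi> ^^ j) w + of_int (l - 1)" "j < p" by simp_all
    then show "x \<in> C" unfolding memC by blast
  qed
  have invC: "\<Phi> ` C = C"
  proof
    show "\<Phi> ` C \<subseteq> C"
    proof
      fix y assume "y \<in> \<Phi> ` C"
      then obtain x where "x \<in> C" "y = \<Phi> x" by blast
      then obtain j l where j: "j < p" and y: "y = \<Phi> ((\<Phi> ^^ j) w + of_int l)" unfolding memC by blast
      then have y2: "y = (\<Phi> ^^ Suc j) w + of_int l" by (simp add: plus_int)
      show "y \<in> C"
      proof (cases "Suc j < p")
        case True then show ?thesis using y2 unfolding memC by blast
      next
        case False
        then have "Suc j = p" using j by simp
        then have "y = (\<Phi> ^^ 0) w + of_int (k + l)" using y2 per by simp
        then show ?thesis using p unfolding memC by blast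
      qed
    qed
    show "C \<subseteq> \<Phi> ` C"
    proof
      fix y assume "y \<in> C"
      then obtain j l where j: "j < p" and y: "y = (\<Phi> ^^ j) w + of_int l" unfolding memC by blast
      show "y \<in> \<Phi> ` C"
      proof (cases j)
        case 0
        have pp: "p = Suc (p - 1)" using p by simp
        have "(\<Phi> ^^ p) w = \<Phi> ((\<Phi> ^^ (p - 1)) w)" by (subst pp) simp
        moreover have "\<Phi> ((\<Phi> ^^ (p - 1)) w + of_int (l - k)) = \<Phi> ((\<Phi> ^^ (p - 1)) w) + of_int (l - k)"
          by (rule plus_int)
        ultimately have "\<Phi> ((\<Phi> ^^ (p - 1)) w + of_int (l - k)) = y" using per y 0 by simp
        moreover have "(\<Phi> ^^ (p - 1)) w + of_int (l - k) \<in> C"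
          unfolding memC using p by (intro exI[of _ "p - 1"] conjI exI[of _ "l - k"]) auto
        ultimately show ?thesis by blast
      next
        case (Suc i)
        have "\<Phi> ((\<Phi> ^^ i) w + of_int l) = y" using y Suc by (simp add: plus_int)
        moreover have "(\<Phi> ^^ i) w + of_int l \<in> C"
          unfolding memC using j Suc by (intro exI[of _ i] conjI exI[of _ l]) auto
        ultimately show ?thesis by blast
      qed
    qed
  qed
  have "w \<in> C" unfolding memC using p by (intro exI[of _ 0] conjI exI[of _ 0]) auto
  then have neC: "C \<noteq> {}" by blast
  have "countable C" unfolding C_def E_def by auto
  then have "C \<noteq> UNIV" using uncountable_UNIV_real by auto
  moreover have "closed C \<and> (\<forall>x. x \<in> C \<longleftrightarrow> x + 1 \<in> C) \<and> \<Phi> ` C = C \<longrightarrow> C = {} \<or> C = UNIV"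
    using minimal unfolding minimal_lift_def by (rule spec)
  ultimately show False using closedC perC invC neC by blast
qed

lemma orbit_inj:
  assumes "(\<Phi> ^^ m) x0 - (\<Phi> ^^ n) x0 = of_int k"
  shows "m = n"
proof (rule ccontr)
  assume mn: "m \<noteq> n"
  have gen: False if "a < b" "(\<Phi> ^^ b) x0 = (\<Phi> ^^ a) x0 + of_int c" for a b c
  proof -
    have "(\<Phi> ^^ b) x0 = (\<Phi> ^^ (b - a)) ((\<Phi> ^^ a) x0)"
      using that(1) by (metis funpow_add le_add_diff_inverse2 less_imp_le o_apply)
    then show False using no_periodic[of "b - a" "(\<Phi> ^^ a) x0" c] that by simp
  qed
  show False
  proof (cases "n < m")
    case True then show False using gen[of n m k] assms by simp
  next
    case False then have "m < n" using mn by simp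
    then show False using gen[of m n "- k"] assms by simp
  qed
qed

lemma Im_ee: "Im (ee a * cnj (ee b)) = sin (2 * pi * (a - b))"
proof -
  have e: "ee x = cis (2 * pi * x)" for x unfolding ee_def cis_conv_exp by (simp add: mult_ac)
  show ?thesis unfolding e cis_cnj cis_mult by (simp add: algebra_simps)
qed

lemma select:
  fixes x0 :: real
  defines "u \<equiv> \<lambda>n. (\<Phi> ^^ n) x0"
  shows "\<exists>I. finite I \<and> card I = N \<and> (\<forall>a\<in>I. \<forall>b\<in>I. a \<noteq> b \<longrightarrow> Im (ee (u a) * cnj (ee (u b))) \<noteq> 0)"
proof -
  define R where "R a b \<longleftrightarrow> (\<exists>i::int. 2 * (u a - u b) = of_int i)" for a b
  have R_sym: "R a b \<Longrightarrow> R b a" for a b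
  proof -
    assume "R a b" then obtain i where "2 * (u a - u b) = of_int i" unfolding R_def by blast
    then have "2 * (u b - u a) = of_int (- i)" by simp
    then show "R b a" unfolding R_def by blast
  qed
  have inj: "a = b" if "u a - u b = of_int k" for a b k
    using orbit_inj[of a x0 b k] that unfolding u_def by simp
  have fin: "finite {b. R a b}" for a
  proof -
    define X where "X = {b. \<exists>m::int. u b - u a = of_int m + 1/2}"
    have sub: "{b. R a b} \<subseteq> {a} \<union> X"
    proof
      fix b assume "b \<in> {b. R a b}"
      then obtain i where i: "2 * (u a - u b) = of_int i" unfolding R_def by blast
      show "b \<in> {a} \<union> X"
      proof (cases "even i")
        case True
        then obtain m where "i = 2 * m" by (metis evenE)
        then have "u a - u b = of_int m" using i by simp
        then show ?thesis using inj by blast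
      next
        case False
        then obtain m where "i = 2 * m + 1" by (metis oddE)
        then have "u b - u a = of_int (- m - 1) + 1/2" using i by simp
        then show ?thesis unfolding X_def by blast
      qed
    qed
    have "finite X"
    proof (cases "X = {}")
      case False
      then obtain b0 where b0: "b0 \<in> X" by blast
      have "X \<subseteq> {b0}"
      proof
        fix b assume "b \<in> X"
        then obtain m m' :: int where "u b - u a = of_int m + 1/2" "u b0 - u a = of_int m' + 1/2"
          using b0 unfolding X_def by blast
        then have "u b - u b0 = of_int (m - m')" by simp
        then show "b \<in> {b0}" using inj by blast
      qed
      then show ?thesis using finite_subset by blast
    qed simp
    then show ?thesis using sub finite_subset by blast
  qed
  have "\<exists>I. finite I \<and> card I = N \<and> (\<forall>a\<in>I. \<forall>b\<in>I. a \<noteq> b \<longrightarrow> \<not> R a b)"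
  proof (induction N)
    case 0 then show ?case by (intro exI[of _ "{}"]) simp
  next
    case (Suc N)
    then obtain I where I: "finite I" "card I = N" "\<forall>a\<in>I. \<forall>b\<in>I. a \<noteq> b \<longrightarrow> \<not> R a b" by blast
    have "finite (I \<union> (\<Union>a\<in>I. {b. R a b}))" using I(1) fin by simp
    then obtain j where j: "j \<notin> I \<union> (\<Union>a\<in>I. {b. R a b})" using ex_new_if_finite[OF infinite_UNIV_nat] by blast
    have "finite (insert j I)" "card (insert j I) = Suc N" using I j by auto
    moreover have "\<forall>a\<in>insert j I. \<forall>b\<in>insert j I. a \<noteq> b \<longrightarrow> \<not> R a b"
      using I(3) j R_sym by blast
    ultimately show ?case by blast
  qed
  then obtain I where I: "finite I" "card I = N" "\<forall>a\<in>I. \<forall>b\<in>I. a \<noteq> b \<longrightarrow> \<not> R a b" by blast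
  have "Im (ee (u a) * cnj (ee (u b))) \<noteq> 0" if "\<not> R a b" for a b
  proof
    assume "Im (ee (u a) * cnj (ee (u b))) = 0"
    then have "sin (2 * pi * (u a - u b)) = 0" by (simp only: Im_ee)
    then obtain i :: int where "2 * pi * (u a - u b) = of_int i * pi" unfolding sin_zero_iff_int2 by blast
    then have "2 * (u a - u b) = of_int i" by simp
    then show False using that unfolding R_def by blast
  qed
  then show ?thesis using I by blast
qed

end



theorem proposition3p5:
  fixes \<Phi> :: "real \<Rightarrow> real" and x0 :: real
  assumes "circle_homeo_lift \<Phi>" and "minimal_lift \<Phi>"
  shows "(bounded (curlicue (\<lambda>n. (\<Phi> ^^ n) x0)) \<and> superficial (\<lambda>n. (\<Phi> ^^ n) x0)
            \<longleftrightarrow> (\<exists>v. cohom_solution \<Phi> v))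
       \<and> (bounded (curlicue (\<lambda>n. (\<Phi> ^^ n) x0)) \<longrightarrow>
            ((\<lambda>N. (\<Sum>k<N. exp (2 * of_real pi * \<i> * of_real ((\<Phi> ^^ k) x0))) / of_nat N)
               \<longlonglongrightarrow> 0)
          \<and> (\<exists>v. cohom_solution \<Phi> v \<and> v x0 = 0)
          \<and> (\<forall>v. cohom_solution \<Phi> v \<and> v x0 = 0 \<longrightarrow>
               (\<forall>n. curlicue_vertex (\<lambda>n. (\<Phi> ^^ n) x0) n = v ((\<Phi> ^^ n) x0)
                    \<and> curlicue_vertex (\<lambda>n. (\<Phi> ^^ n) x0) n \<in> range v)))"
proof -
  interpret circ_min \<Phi>
    by (intro circ_min.intro circ.intro circ_min_axioms.intro assms)
  define u where "u = (\<lambda>n. (\<Phi> ^^ n) x0)"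
  have sumz: "(\<Sum>k<N. exp (2 * of_real pi * \<i> * of_real ((\<Phi> ^^ k) x0))) = curlicue_vertex u N" for N
    unfolding curlicue_vertex_def u_def by simp
  have bc: "bounded (curlicue u) \<longleftrightarrow> bounded (range (curlicue_vertex u))"
    by (rule bounded_curlicue_iff)
  have sup: "superficial u" if b: "bounded (curlicue u)"
  proof -
    have "filterlim (\<lambda>\<epsilon>. measure lborel (eps_nbhd (curlicue u) \<epsilon>) / \<epsilon>) at_top (at_right 0)"
      by (rule superficial_core[OF b]) (unfold u_def, rule select)
    then show ?thesis unfolding superficial_def using b by simp
  qed
  have vert: "curlicue_vertex u n = v (u n) - v x0" if "cohom_solution \<Phi> v" for v n
    unfolding u_def by (rule cohom_vertex[OF that])
  have vb: "bounded (range (curlicue_vertex u))" if v: "cohom_solution \<Phi> v" for v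
  proof -
    obtain B where B: "\<And>x. norm (v x) \<le> B" using cohom_bounded[OF v] unfolding bounded_iff by blast
    have "norm (curlicue_vertex u n) \<le> 2 * B" for n
    proof -
      have "norm (v (u n) - v x0) \<le> norm (v (u n)) + norm (v x0)" by (rule norm_triangle_ineq4)
      then show ?thesis unfolding vert[OF v] using B[of "u n"] B[of x0] by linarith
    qed
    then show ?thesis unfolding bounded_iff by blast
  qed
  have part1: "bounded (curlicue u) \<and> superficial u \<longleftrightarrow> (\<exists>v. cohom_solution \<Phi> v)"
  proof
    assume "bounded (curlicue u) \<and> superficial u"
    then have "bounded (range (curlicue_vertex u))" using bc by blast
    then show "\<exists>v. cohom_solution \<Phi> v" unfolding u_def by (rule GH)
  next
    assume "\<exists>v. cohom_solution \<Phi> v"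
    then obtain v where "cohom_solution \<Phi> v" by blast
    then have "bounded (curlicue u)" using vb bc by blast
    then show "bounded (curlicue u) \<and> superficial u" using sup by blast
  qed
  have part2: "((\<lambda>N. curlicue_vertex u N / of_nat N) \<longlonglongrightarrow> 0)
          \<and> (\<exists>v. cohom_solution \<Phi> v \<and> v x0 = 0)
          \<and> (\<forall>v. cohom_solution \<Phi> v \<and> v x0 = 0 \<longrightarrow>
               (\<forall>n. curlicue_vertex u n = v ((\<Phi> ^^ n) x0) \<and> curlicue_vertex u n \<in> range v))"
    if b: "bounded (curlicue u)"
  proof (intro conjI allI impI)
    have br: "bounded (range (curlicue_vertex u))" using b bc by blast
    then obtain B where B: "\<And>n. norm (curlicue_vertex u n) \<le> B" unfolding bounded_iff by blast
    show "(\<lambda>N. curlicue_vertex u N / of_nat N) \<longlonglongrightarrow> 0"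
    proof (rule Lim_null_comparison)
      show "\<forall>\<^sub>F N in sequentially. norm (curlicue_vertex u N / of_nat N) \<le> B / real N"
      proof (intro always_eventually allI)
        fix N
        have "norm (curlicue_vertex u N / of_nat N) = norm (curlicue_vertex u N) / real N"
          by (simp add: norm_divide)
        also have "\<dots> \<le> B / real N" using B[of N] by (simp add: divide_right_mono)
        finally show "norm (curlicue_vertex u N / of_nat N) \<le> B / real N" .
      qed
      show "(\<lambda>N. B / real N) \<longlonglongrightarrow> 0" by (rule lim_const_over_n)
    qed
    obtain v0 where v0: "cohom_solution \<Phi> v0" using GH br unfolding u_def by blast
    define v where "v x = v0 x - v0 x0" for x
    have "cohom_solution \<Phi> v"
      using v0 unfolding cohom_solution_def v_def by (auto intro: continuous_intros simp: algebra_simps)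
    moreover have "v x0 = 0" unfolding v_def by simp
    ultimately show "\<exists>v. cohom_solution \<Phi> v \<and> v x0 = 0" by blast
  next
    fix v n assume v: "cohom_solution \<Phi> v \<and> v x0 = 0"
    then show "curlicue_vertex u n = v ((\<Phi> ^^ n) x0)" using vert[of v n] by (simp add: u_def)
    then show "curlicue_vertex u n \<in> range v" by simp
  qed
  have eq: "(\<lambda>N. (\<Sum>k<N. exp (2 * of_real pi * \<i> * of_real ((\<Phi> ^^ k) x0))) / of_nat N)
      = (\<lambda>N. curlicue_vertex u N / of_nat N)" by (simp only: sumz)
  show ?thesis unfolding eq u_def[symmetric]
    by (rule conjI[OF part1 impI[OF part2]])
qed


end
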